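(* Let $n>1$, $t,p\ge 1$ be integers, let $G$ be a regular graph of order $m$, and suppose $tpm>1$. If $n\equiv 0\pmod 2$, or $ntpm\equiv 1\pmod 2$, or $tpG$ is distance magic, then $tH_{n,p}\otimes G$ is distance magic.
   Context: A graph $G$ on $v$ vertices is distance magic if there is a bijection $f:V(G)\to\{1,\ldots,v\}$ and a constant $k$ such that for every vertex $x$, $\sum_{y\in N(x)}f(y)=k$, where $N(x)$ is the set of neighbours of $x$. $H_{n,p}$ denotes the complete multipartite graph with $p$ partite sets each of size $n$; $cH$ denotes the disjoint union of $c$ copies of $H$. The Kronecker (tensor) product $G\otimes H$ has vertex set $V(G)\times V(H)$, with $(g,h)\sim(g',h')$ iff $gg'\in E(G)$ and $hh'\in E(H)$. *)

theory Defs
  imports Main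
begin

definition simple_graph :: "'v set \<Rightarrow> ('v \<Rightarrow> 'v \<Rightarrow> bool) \<Rightarrow> bool" where
  "simple_graph V E \<longleftrightarrow> finite V \<and> (\<forall>x\<in>V. \<forall>y\<in>V. E x y \<longrightarrow> E y x) \<and> (\<forall>x\<in>V. \<not> E x x)"

definition nbhd :: "'v set \<Rightarrow> ('v \<Rightarrow> 'v \<Rightarrow> bool) \<Rightarrow> 'v \<Rightarrow> 'v set" where
  "nbhd V E x = {y\<in>V. E x y}"

definition regular_graph :: "'v set \<Rightarrow> ('v \<Rightarrow> 'v \<Rightarrow> bool) \<Rightarrow> bool" where
  "regular_graph V E \<longleftrightarrow> simple_graph V E \<and> (\<exists>r. \<forall>x\<in>V. card (nbhd V E x) = r)"

definition distance_magic :: "'v set \<Rightarrow> ('v \<Rightarrow> 'v \<Rightarrow> bool) \<Rightarrow> bool" where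
  "distance_magic V E \<longleftrightarrow>
     (\<exists>(f :: 'v \<Rightarrow> nat) k. bij_betw f V {1..card V} \<and> (\<forall>x\<in>V. (\<Sum>y\<in>nbhd V E x. f y) = k))"

definition copies_verts :: "nat \<Rightarrow> 'v set \<Rightarrow> (nat \<times> 'v) set" where
  "copies_verts c V = {0..<c} \<times> V"

definition copies_adj :: "('v \<Rightarrow> 'v \<Rightarrow> bool) \<Rightarrow> nat \<times> 'v \<Rightarrow> nat \<times> 'v \<Rightarrow> bool" where
  "copies_adj E u w \<longleftrightarrow> fst u = fst w \<and> E (snd u) (snd w)"

text \<open>Complete multipartite graph H_{n,p}: vertices (i,a), i < n the position within
  part a < p; (i,a) ~ (j,b) iff a \<noteq> b.\<close>
definition H_verts :: "nat \<Rightarrow> nat \<Rightarrow> (nat \<times> nat) set" where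
  "H_verts n p = {0..<n} \<times> {0..<p}"

definition H_adj :: "nat \<times> nat \<Rightarrow> nat \<times> nat \<Rightarrow> bool" where
  "H_adj u w \<longleftrightarrow> snd u \<noteq> snd w"

definition kron_verts :: "'a set \<Rightarrow> 'b set \<Rightarrow> ('a \<times> 'b) set" where
  "kron_verts V W = V \<times> W"

definition kron_adj :: "('a \<Rightarrow> 'a \<Rightarrow> bool) \<Rightarrow> ('b \<Rightarrow> 'b \<Rightarrow> bool) \<Rightarrow> 'a \<times> 'b \<Rightarrow> 'a \<times> 'b \<Rightarrow> bool" where
  "kron_adj E F u w \<longleftrightarrow> E (fst u) (fst w) \<and> F (snd u) (snd w)"

end

theory Submission imports Defs begin

lemma surj_card_bij:
  assumes "finite A" "f ` A = B" "card A = card B"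
  shows "bij_betw f A B"
  using assms eq_card_imp_inj_on unfolding bij_betw_def by metis

lemma sum_split_add:
  fixes g :: "nat \<Rightarrow> nat"
  shows "(\<Sum>j<a+b. g j) = (\<Sum>j<a. g j) + (\<Sum>k<b. g (a+k))"
  by (induction b) auto

lemma pairs_ext:
  fixes s h q N :: nat and G :: "nat \<Rightarrow> nat \<Rightarrow> nat"
  assumes G: "bij_betw (\<lambda>(j,x). G j x) ({0..<s}\<times>{0..<q}) {1..s*q}"
  and N: "N = (s+2*h)*q"
  and F: "F = (\<lambda>j x. if j < s then G j x else if j < s+h then s*q + x*h + (j-s) + 1
                     else N - (x*h + (j-s-h)))"
  shows "bij_betw (\<lambda>(j,x). F j x) ({0..<s+2*h}\<times>{0..<q}) {1..N}"
    and "\<forall>x<q. (\<Sum>j<s+2*h. F j x) = (\<Sum>j<s. G j x) + h*(N+s*q+1)"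
proof -
  have Gim: "G j x \<in> {1..s*q}" if "j<s" "x<q" for j x
    using bij_betwE[OF G, rule_format, of "(j,x)"] that by auto
  have lt: "x*h + k < h*q" if "x<q" "k<h" for x k
  proof -
    have "x*h + k < x*h + h" using that by simp
    also have "\<dots> = (x+1)*h" by simp
    also have "\<dots> \<le> q*h" using that by (intro mult_le_mono1) simp
    finally show ?thesis by (simp add: mult.commute)
  qed
  show "bij_betw (\<lambda>(j,x). F j x) ({0..<s+2*h}\<times>{0..<q}) {1..N}"
  proof (rule surj_card_bij)
    show "finite ({0..<s+2*h}\<times>{0..<q})" by simp
    show "card ({0..<s+2*h}\<times>{0..<q}) = card {1..N}" using N by (simp add: card_cartesian_product)
    show "(\<lambda>(j,x). F j x) ` ({0..<s+2*h}\<times>{0..<q}) = {1..N}"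
    proof
      show "(\<lambda>(j,x). F j x) ` ({0..<s+2*h}\<times>{0..<q}) \<subseteq> {1..N}"
      proof (rule image_subsetI)
        fix u assume u: "u \<in> {0..<s+2*h}\<times>{0..<q}"
        obtain j x where ux: "u = (j,x)" by force
        have j: "j < s+2*h" and x: "x < q" using u ux by auto
        have "F j x \<in> {1..N}"
        proof (cases "j < s")
          case True then show ?thesis using Gim[OF True x] N F
            by (auto intro: order_trans[OF _ mult_le_mono1[of s "s+2*h"]])
        next
          case False
          note l = lt[OF x, of "j-s"] lt[OF x, of "j-s-h"]
          show ?thesis
          proof (cases "j < s+h")
            case True
            have a: "x*h + (j-s) < h*q" using l True False by simp
            have "F j x = s*q + (x*h + (j-s)) + 1" using F True False by simp
            moreover have "s*q + (x*h + (j-s)) + 1 \<le> N" using a N by (simp add: algebra_simps)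
            ultimately show ?thesis by simp
          next
            case False2: False
            have a: "x*h + (j-s-h) < h*q" using l False2 False j by simp
            have "F j x = N - (x*h + (j-s-h))" using F False2 False by simp
            moreover have "x*h + (j-s-h) < N" using a N by (simp add: algebra_simps)
            ultimately show ?thesis by simp
          qed
        qed
        then show "(\<lambda>(j,x). F j x) u \<in> {1..N}" using ux by simp
      qed
      show "{1..N} \<subseteq> (\<lambda>(j,x). F j x) ` ({0..<s+2*h}\<times>{0..<q})"
      proof
        fix y assume y: "y \<in> {1..N}"
        show "y \<in> (\<lambda>(j,x). F j x) ` ({0..<s+2*h}\<times>{0..<q})"
        proof (cases "y \<le> s*q")
          case True
          then have "y \<in> (\<lambda>(j,x). G j x) ` ({0..<s}\<times>{0..<q})" using G y unfolding bij_betw_def by auto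
          then obtain j x where jx: "j<s" "x<q" "y = G j x" by auto
          then have "F j x = y" using F by simp
          then show ?thesis using jx by (auto intro!: image_eqI[of _ _ "(j,x)"])
        next
          case False
          show ?thesis
          proof (cases "y \<le> s*q + h*q")
            case True
            define z where "z = y - s*q - 1"
            have z: "z < h*q" using True False z_def by simp
            then have hp: "h > 0" by (cases h) auto
            define x where "x = z div h"
            define k where "k = z mod h"
            have xq: "x < q" using z unfolding x_def by (simp add: less_mult_imp_div_less mult.commute)
            have kh: "k < h" using hp unfolding k_def by simp
            have zz: "z = x*h + k" unfolding x_def k_def by simp
            have "F (s+k) x = y" using F kh zz z_def False by auto
            moreover have "(s+k, x) \<in> {0..<s+2*h}\<times>{0..<q}" using kh xq by auto
            ultimately show ?thesis by (auto intro!: image_eqI[of _ _ "(s+k,x)"])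
          next
            case False2: False
            define z where "z = N - y"
            have z: "z < h*q" using False2 y N z_def by (auto simp: algebra_simps)
            then have hp: "h > 0" by (cases h) auto
            define x where "x = z div h"
            define k where "k = z mod h"
            have xq: "x < q" using z unfolding x_def by (simp add: less_mult_imp_div_less mult.commute)
            have kh: "k < h" using hp unfolding k_def by simp
            have zz: "z = x*h + k" unfolding x_def k_def by simp
            have "F (s+h+k) x = y" using F kh zz z_def y by auto
            moreover have "(s+h+k, x) \<in> {0..<s+2*h}\<times>{0..<q}" using kh xq by auto
            ultimately show ?thesis by (auto intro!: image_eqI[of _ _ "(s+h+k,x)"])
          qed
        qed
      qed
    qed
  qed
  show "\<forall>x<q. (\<Sum>j<s+2*h. F j x) = (\<Sum>j<s. G j x) + h*(N+s*q+1)"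
  proof (intro allI impI)
    fix x assume x: "x < q"
    have e1: "(\<Sum>j<s+2*h. F j x) = (\<Sum>j<s. F j x) + ((\<Sum>k<h. F (s+k) x) + (\<Sum>k<h. F (s+h+k) x))"
      using sum_split_add[of "\<lambda>j. F j x" "s+h" h] sum_split_add[of "\<lambda>j. F j x" s h]
      by (simp add: add.assoc mult_2)
    have e2: "(\<Sum>j<s. F j x) = (\<Sum>j<s. G j x)" using F by simp
    have e3: "(\<Sum>k<h. F (s+k) x) + (\<Sum>k<h. F (s+h+k) x) = (\<Sum>k<h. F (s+k) x + F (s+h+k) x)"
      by (simp add: sum.distrib)
    have e4: "\<dots> = (\<Sum>k<h. N+s*q+1)"
    proof (rule sum.cong)
      fix k assume "k \<in> {..<h}"
      then have k: "k < h" by simp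
      have "x*h + k \<le> N" using lt[OF x k] N by (simp add: algebra_simps)
      then show "F (s+k) x + F (s+h+k) x = N+s*q+1" using F k by simp
    qed simp
    show "(\<Sum>j<s+2*h. F j x) = (\<Sum>j<s. G j x) + h*(N+s*q+1)" using e1 e2 e3 e4 by simp
  qed
qed


definition sfun :: "nat \<Rightarrow> nat \<Rightarrow> nat" where
  "sfun h x = (if x \<le> h then x+h+1 else x-h)"

definition G3 :: "nat \<Rightarrow> nat \<Rightarrow> nat \<Rightarrow> nat" where
  "G3 h j x = (if j = 0 then x+1 else if j = 1 then (2*h+1) + sfun h x
              else 2*(2*h+1) + (3*h+2 - x - sfun h x))"

lemma G3_sum: "x < 2*h+1 \<Longrightarrow> (\<Sum>j<3. G3 h j x) = 3*(2*h+1) + 3*h + 3"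
  by (simp add: numeral_3_eq_3 G3_def sfun_def)

lemma G3_bij: "bij_betw (\<lambda>(j,x). G3 h j x) ({0..<3}\<times>{0..<2*h+1}) {1..3*(2*h+1)}"
proof (rule surj_card_bij)
  show "finite ({0..<3::nat}\<times>{0..<2*h+1})" by simp
  show "card ({0..<3::nat}\<times>{0..<2*h+1}) = card {1..3*(2*h+1)}" by (simp add: card_cartesian_product)
  show "(\<lambda>(j,x). G3 h j x) ` ({0..<3}\<times>{0..<2*h+1}) = {1..3*(2*h+1)}"
  proof
    show "(\<lambda>(j,x). G3 h j x) ` ({0..<3}\<times>{0..<2*h+1}) \<subseteq> {1..3*(2*h+1)}"
    proof (rule image_subsetI)
      fix u assume u: "u \<in> {0..<3::nat}\<times>{0..<2*h+1}"
      obtain j x where ux: "u = (j,x)" by force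
      have j: "j < 3" and x: "x < 2*h+1" using u ux by auto
      have "G3 h j x \<in> {1..3*(2*h+1)}"
        using j x unfolding G3_def sfun_def by auto
      then show "(\<lambda>(j,x). G3 h j x) u \<in> {1..3*(2*h+1)}" using ux by simp
    qed
    show "{1..3*(2*h+1)} \<subseteq> (\<lambda>(j,x). G3 h j x) ` ({0..<3}\<times>{0..<2*h+1})"
    proof
      fix y assume y: "y \<in> {1..3*(2*h+1)}"
      have "\<exists>j x. j < 3 \<and> x < 2*h+1 \<and> G3 h j x = y"
      proof (cases "y \<le> 2*h+1")
        case True
        then show ?thesis using y by (intro exI[of _ 0] exI[of _ "y-1"]) (auto simp: G3_def)
      next
        case False
        show ?thesis
        proof (cases "y \<le> 2*(2*h+1)")
          case True
          define sg where "sg = y - (2*h+1)"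
          show ?thesis
          proof (cases "sg \<ge> h+1")
            case True
            then show ?thesis using False \<open>y \<le> 2*(2*h+1)\<close> sg_def
              by (intro exI[of _ 1] exI[of _ "sg-h-1"]) (auto simp: G3_def sfun_def)
          next
            case False2: False
            then show ?thesis using False \<open>y \<le> 2*(2*h+1)\<close> sg_def
              by (intro exI[of _ 1] exI[of _ "sg+h"]) (auto simp: G3_def sfun_def)
          qed
        next
          case False2: False
          define d where "d = 3*h+2 - (y - 2*(2*h+1))"
          have d1: "d \<ge> h+1" "d \<le> 3*h+1" using y False2 d_def by auto
          show ?thesis
          proof (cases "even (d-h-1)")
            case True
            from True obtain x where x: "d - h - 1 = 2*x" by (rule evenE)
            show ?thesis using x d1 d_def y False2
              by (intro exI[of _ 2] exI[of _ x]) (auto simp: G3_def sfun_def)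
          next
            case False3: False
            from False3 obtain x' where x: "d - h - 1 = 2*x'+1" by (rule oddE)
            show ?thesis using x d1 d_def y False2
              by (intro exI[of _ 2] exI[of _ "x'+h+1"]) (auto simp: G3_def sfun_def)
          qed
        qed
      qed
      then obtain j x where "j < 3" "x < 2*h+1" "G3 h j x = y" by blast
      then show "y \<in> (\<lambda>(j,x). G3 h j x) ` ({0..<3}\<times>{0..<2*h+1})"
        by (auto intro!: image_eqI[of _ _ "(j,x)"])
    qed
  qed
qed

lemma G1_bij: "bij_betw (\<lambda>(j::nat,x). x+1) ({0..<1}\<times>{0..<q::nat}) {1..1*q}"
proof (rule surj_card_bij)
  show "finite ({0..<1::nat}\<times>{0..<q})" by (intro finite_cartesian_product) auto
  show "card ({0..<1::nat}\<times>{0..<q}) = card {1..1*q}" by (simp add: card_cartesian_product)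
  show "(\<lambda>(j::nat,x). x+1) ` ({0..<1}\<times>{0..<q}) = {1..1*q}"
  proof
    show "(\<lambda>(j::nat,x). x+1) ` ({0..<1}\<times>{0..<q}) \<subseteq> {1..1*q}" by auto
    show "{1..1*q} \<subseteq> (\<lambda>(j::nat,x). x+1) ` ({0..<1}\<times>{0..<q})"
    proof
      fix y assume "y \<in> {1..1*q}"
      then show "y \<in> (\<lambda>(j::nat,x). x+1) ` ({0..<1}\<times>{0..<q})"
        by (auto intro!: image_eqI[of _ _ "(0,y-1)"])
    qed
  qed
qed


lemma main_reduction:
  fixes V :: "'v set" and \<pi> :: "nat \<times> nat \<times> 'v \<Rightarrow> nat" and F :: "nat \<Rightarrow> nat \<Rightarrow> nat"
  assumes sg: "simple_graph V E"
  and pi: "bij_betw \<pi> ({0..<t}\<times>({0..<p}\<times>V)) {0..<q}"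
  and F: "bij_betw (\<lambda>(j,x). F j x) ({0..<n}\<times>{0..<q}) {1..n*q}"
  and K: "\<And>c b v. c<t \<Longrightarrow> b<p \<Longrightarrow> v\<in>V \<Longrightarrow> (\<Sum>w\<in>nbhd V E v. \<Sum>j<n. F j (\<pi>(c,(b,w)))) = K0"
  shows "distance_magic (kron_verts (copies_verts t (H_verts n p)) V) (kron_adj (copies_adj H_adj) E)"
proof -
  have finV: "finite V" using sg unfolding simple_graph_def by simp
  define Vk where "Vk = kron_verts (copies_verts t (H_verts n p)) V"
  have Vk: "Vk = ({0..<t}\<times>({0..<n}\<times>{0..<p}))\<times>V"
    unfolding Vk_def kron_verts_def copies_verts_def H_verts_def by simp
  define \<psi> where "\<psi> = (\<lambda>((c,(j::nat,b)),w). (j, \<pi>(c,(b,w))))"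
  have cardI: "card ({0..<t}\<times>({0..<p}\<times>V)) = q" using bij_betw_same_card[OF pi] by simp
  have psi: "bij_betw \<psi> Vk ({0..<n}\<times>{0..<q})"
  proof (rule surj_card_bij)
    show "finite Vk" using finV Vk by simp
    show "card Vk = card ({0..<n}\<times>{0..<q})"
      using cardI finV Vk by (simp add: card_cartesian_product)
    show "\<psi> ` Vk = {0..<n}\<times>{0..<q}"
    proof
      show "\<psi> ` Vk \<subseteq> {0..<n}\<times>{0..<q}"
        using bij_betwE[OF pi] unfolding Vk \<psi>_def by auto
      show "{0..<n}\<times>{0..<q} \<subseteq> \<psi> ` Vk"
      proof clarify
        fix j x assume j: "j \<in> {0..<n}" and x: "x \<in> {0..<q}"
        have "x \<in> \<pi> ` ({0..<t}\<times>({0..<p}\<times>V))" using pi x unfolding bij_betw_def by simp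
        then obtain i where i: "i \<in> {0..<t}\<times>({0..<p}\<times>V)" "\<pi> i = x" by blast
        obtain c b w where cbw: "i = (c,(b,w))" by (cases i) auto
        have "((c,(j,b)),w) \<in> Vk" using i cbw j unfolding Vk by auto
        moreover have "\<psi> ((c,(j,b)),w) = (j,x)" using i cbw unfolding \<psi>_def by simp
        ultimately show "(j,x) \<in> \<psi> ` Vk" by (metis imageI)
      qed
    qed
  qed
  define f where "f = (\<lambda>(j,x). F j x) \<circ> \<psi>"
  have fb: "bij_betw f Vk {1..n*q}" unfolding f_def using bij_betw_trans[OF psi F] .
  have cardVk: "card Vk = n*q" using bij_betw_same_card[OF fb] by simp
  have magic: "(\<Sum>y\<in>nbhd Vk (kron_adj (copies_adj H_adj) E) u. f y) = (p-1)*K0" if u: "u \<in> Vk" for u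
  proof -
    obtain c i a v where uu: "u = ((c,(i,a)),v)" by (metis prod.exhaust)
    have c: "c < t" and a: "a < p" and v: "v \<in> V" using u uu Vk by auto
    define P where "P = {0..<p} - {a}"
    define NV where "NV = nbhd V E v"
    have finNV: "finite NV" using finV unfolding NV_def nbhd_def by simp
    define emb where "emb = (\<lambda>((j::nat,b::nat),w::'v). ((c,(j,b)),w))"
    have nb: "nbhd Vk (kron_adj (copies_adj H_adj) E) u = emb ` (({0..<n}\<times>P)\<times>NV)"
      unfolding nbhd_def Vk uu emb_def P_def NV_def kron_adj_def copies_adj_def H_adj_def
      apply (rule set_eqI)
      subgoal for y
      proof -
        obtain c' j b w where y: "y = ((c',(j,b)),w)" by (metis prod.exhaust)
        show ?thesis unfolding y using c by (auto simp: image_iff)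
      qed
      done
    have inj: "inj_on emb (({0..<n}\<times>P)\<times>NV)" unfolding emb_def inj_on_def by auto
    have "(\<Sum>y\<in>nbhd Vk (kron_adj (copies_adj H_adj) E) u. f y)
        = (\<Sum>y\<in>({0..<n}\<times>P)\<times>NV. f (emb y))"
      unfolding nb using sum.reindex[OF inj] by simp
    also have "\<dots> = (\<Sum>y\<in>({0..<n}\<times>P)\<times>NV. (\<lambda>((j,b),w). F j (\<pi>(c,(b,w)))) y)"
      by (rule sum.cong) (auto simp: f_def emb_def \<psi>_def)
    also have "\<dots> = (\<Sum>(j,b)\<in>{0..<n}\<times>P. \<Sum>w\<in>NV. F j (\<pi>(c,(b,w))))"
      by (subst sum.cartesian_product[symmetric]) (simp add: case_prod_beta)
    also have "\<dots> = (\<Sum>j\<in>{0..<n}. \<Sum>b\<in>P. \<Sum>w\<in>NV. F j (\<pi>(c,(b,w))))"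
      by (subst sum.cartesian_product[symmetric]) simp
    also have "\<dots> = (\<Sum>b\<in>P. \<Sum>j\<in>{0..<n}. \<Sum>w\<in>NV. F j (\<pi>(c,(b,w))))"
      by (rule sum.swap)
    also have "\<dots> = (\<Sum>b\<in>P. \<Sum>w\<in>NV. \<Sum>j\<in>{0..<n}. F j (\<pi>(c,(b,w))))"
      by (rule sum.cong[OF refl], rule sum.swap)
    also have "\<dots> = (\<Sum>b\<in>P. K0)"
    proof (rule sum.cong)
      fix b assume "b \<in> P"
      then have "b < p" unfolding P_def by simp
      then show "(\<Sum>w\<in>NV. \<Sum>j\<in>{0..<n}. F j (\<pi>(c,(b,w)))) = K0"
        using K[OF c _ v] unfolding NV_def by (simp add: atLeast0LessThan)
    qed simp
    also have "\<dots> = (p-1)*K0" using a unfolding P_def by simp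
    finally show ?thesis .
  qed
  show ?thesis unfolding distance_magic_def
    using fb cardVk magic unfolding Vk_def by metis
qed


lemma const_case:
  fixes V :: "'v set" and F :: "nat \<Rightarrow> nat \<Rightarrow> nat"
  assumes sg: "simple_graph V E" and r: "\<forall>x\<in>V. card (nbhd V E x) = r"
  and cardI: "card ({0..<t}\<times>({0..<p}\<times>V)) = q"
  and F: "bij_betw (\<lambda>(j,x). F j x) ({0..<n}\<times>{0..<q}) {1..n*q}"
  and C: "\<forall>x<q. (\<Sum>j<n. F j x) = C"
  shows "distance_magic (kron_verts (copies_verts t (H_verts n p)) V) (kron_adj (copies_adj H_adj) E)"
proof -
  have finV: "finite V" using sg unfolding simple_graph_def by simp
  obtain \<pi> where pi: "bij_betw \<pi> ({0..<t}\<times>({0..<p}\<times>V)) {0..<q}"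
    using ex_bij_betw_finite_nat[of "{0..<t}\<times>({0..<p}\<times>V)"] finV cardI by auto
  show ?thesis
  proof (rule main_reduction[OF sg pi F])
    fix c b v assume c: "c<t" and b: "b<p" and v: "v\<in>V"
    have "(\<Sum>w\<in>nbhd V E v. \<Sum>j<n. F j (\<pi>(c,(b,w)))) = (\<Sum>w\<in>nbhd V E v. C)"
    proof (rule sum.cong)
      fix w assume "w \<in> nbhd V E v"
      then have "w \<in> V" unfolding nbhd_def by simp
      then have "\<pi>(c,(b,w)) < q" using bij_betwE[OF pi] c b by auto
      then show "(\<Sum>j<n. F j (\<pi>(c,(b,w)))) = C" using C by simp
    qed simp
    also have "\<dots> = r * C" using r v by simp
    finally show "(\<Sum>w\<in>nbhd V E v. \<Sum>j<n. F j (\<pi>(c,(b,w)))) = r * C" .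
  qed
qed

theorem corollary2:
  fixes n t p m :: nat and V :: "'v set" and E :: "'v \<Rightarrow> 'v \<Rightarrow> bool"
  assumes "n > 1" and "t \<ge> 1" and "p \<ge> 1"
    and "regular_graph V E" and "card V = m"
    and "t * p * m > 1"
    and "even n \<or> odd (n * t * p * m) \<or> distance_magic (copies_verts (t * p) V) (copies_adj E)"
  shows "distance_magic (kron_verts (copies_verts t (H_verts n p)) V)
                        (kron_adj (copies_adj H_adj) E)"
proof -
  have sg: "simple_graph V E" using assms(4) unfolding regular_graph_def by simp
  obtain r where r: "\<forall>x\<in>V. card (nbhd V E x) = r" using assms(4) unfolding regular_graph_def by auto
  have finV: "finite V" using sg unfolding simple_graph_def by simp
  define q where "q = t*p*m"
  have cardI: "card ({0..<t}\<times>({0..<p}\<times>V)) = q"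
    using assms(5) unfolding q_def by (simp add: card_cartesian_product)
  consider (ev) "even n" | (od) "odd n" "odd q" | (dm) "odd n" "distance_magic (copies_verts (t * p) V) (copies_adj E)"
    using assms(7) unfolding q_def by auto
  then show ?thesis
  proof cases
    case ev
    then obtain h where h: "n = 0 + 2*h" by auto
    define G :: "nat \<Rightarrow> nat \<Rightarrow> nat" where "G = (\<lambda>j x. 0)"
    have G: "bij_betw (\<lambda>(j,x). G j x) ({0..<0}\<times>{0..<q}) {1..0*q}" by (simp add: bij_betw_def)
    define N where "N = n*q"
    define F0 where "F0 = (\<lambda>j x. if j < 0 then G j x else if j < 0+h then 0*q + x*h + (j-0) + 1
                     else N - (x*h + (j-0-h)))"
    have N': "N = (0+2*h)*q" using h N_def by simp
    note P = pairs_ext[OF G N' F0_def]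
    have B: "bij_betw (\<lambda>(j,x). F0 j x) ({0..<n}\<times>{0..<q}) {1..n*q}" using P(1) h N_def by simp
    have C: "\<forall>x<q. (\<Sum>j<n. F0 j x) = h*(N+0*q+1)" using P(2) h by (simp add: G_def)
    show ?thesis by (rule const_case[OF sg r cardI B C])
  next
    case od
    from od(1) obtain k where k: "n = 2*k+1" by (rule oddE)
    have "n = 3 + 2*(k-1)" using k assms(1) by simp
    then obtain h where h: "n = 3 + 2*h" by blast
    obtain h' where h': "q = 2*h'+1" using od(2) by (rule oddE)
    have G: "bij_betw (\<lambda>(j,x). G3 h' j x) ({0..<3}\<times>{0..<q}) {1..3*q}" using G3_bij[of h'] h' by simp
    define N where "N = n*q"
    define F0 where "F0 = (\<lambda>j x. if j < 3 then G3 h' j x else if j < 3+h then 3*q + x*h + (j-3) + 1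
                     else N - (x*h + (j-3-h)))"
    have N': "N = (3+2*h)*q" using h N_def by simp
    note P = pairs_ext[OF G N' F0_def]
    have B: "bij_betw (\<lambda>(j,x). F0 j x) ({0..<n}\<times>{0..<q}) {1..n*q}" using P(1) h N_def by simp
    have C: "\<forall>x<q. (\<Sum>j<n. F0 j x) = 3*(2*h'+1) + 3*h' + 3 + h*(N+3*q+1)" using P(2) h G3_sum h' by simp
    show ?thesis by (rule const_case[OF sg r cardI B C])
  next
    case dm
    define CV where "CV = copies_verts (t*p) V"
    have CV: "CV = {0..<t*p}\<times>V" unfolding CV_def copies_verts_def by simp
    have cardCV: "card CV = q" using CV assms(5) unfolding q_def by (simp add: card_cartesian_product)
    obtain g :: "nat \<times> 'v \<Rightarrow> nat" and k where
      g: "bij_betw g CV {1..q}" and gk: "\<forall>x\<in>CV. (\<Sum>y\<in>nbhd CV (copies_adj E) x. g y) = k"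
      using dm(2) cardCV unfolding distance_magic_def CV_def by metis
    have dlt: "c*p+b < t*p" if "c < t" "b < p" for c b
    proof -
      have "c*p+b < c*p+p" using that by simp
      also have "\<dots> = (c+1)*p" by simp
      also have "\<dots> \<le> t*p" using that by (intro mult_le_mono1) simp
      finally show ?thesis .
    qed
    have gin: "g (c*p+b, w) \<in> {1..q}" if "c < t" "b < p" "w \<in> V" for c b w
      using bij_betwE[OF g] dlt[OF that(1,2)] that(3) CV by auto
    define \<pi> where "\<pi> = (\<lambda>(c,(b,w)). g (c*p+b, w) - 1)"
    have pi: "bij_betw \<pi> ({0..<t}\<times>({0..<p}\<times>V)) {0..<q}"
    proof (rule surj_card_bij)
      show "finite ({0..<t}\<times>({0..<p}\<times>V))" using finV by simp
      show "card ({0..<t}\<times>({0..<p}\<times>V)) = card {0..<q}" using cardI by simp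
      show "\<pi> ` ({0..<t}\<times>({0..<p}\<times>V)) = {0..<q}"
      proof
        show "\<pi> ` ({0..<t}\<times>({0..<p}\<times>V)) \<subseteq> {0..<q}"
        proof (rule image_subsetI)
          fix u assume u: "u \<in> {0..<t}\<times>({0..<p}\<times>V)"
          obtain c b w where uu: "u = (c,(b,w))" by (metis prod.exhaust)
          have "g (c*p+b, w) \<in> {1..q}" using gin u uu by auto
          then show "\<pi> u \<in> {0..<q}" unfolding uu \<pi>_def by auto
        qed
        show "{0..<q} \<subseteq> \<pi> ` ({0..<t}\<times>({0..<p}\<times>V))"
        proof
          fix x assume x: "x \<in> {0..<q}"
          then have "x+1 \<in> g ` CV" using g unfolding bij_betw_def by auto
          then obtain d w where dw: "(d,w) \<in> CV" "g (d,w) = x+1" by auto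
          have d: "d < t*p" and w: "w \<in> V" using dw CV by auto
          define c where "c = d div p"
          define b where "b = d mod p"
          have c: "c < t" unfolding c_def using d by (simp add: less_mult_imp_div_less)
          have b: "b < p" unfolding b_def using assms(3) by simp
          have "c*p+b = d" unfolding c_def b_def by simp
          then have "\<pi> (c,(b,w)) = x" unfolding \<pi>_def using dw by simp
          moreover have "(c,(b,w)) \<in> {0..<t}\<times>({0..<p}\<times>V)" using c b w by simp
          ultimately show "x \<in> \<pi> ` ({0..<t}\<times>({0..<p}\<times>V))" by (metis imageI)
        qed
      qed
    qed
    from dm(1) obtain h where h: "n = 1 + 2*h" by (metis oddE add.commute)
    define G :: "nat \<Rightarrow> nat \<Rightarrow> nat" where "G = (\<lambda>j x. x+1)"
    have G: "bij_betw (\<lambda>(j,x). G j x) ({0..<1}\<times>{0..<q}) {1..1*q}"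
      using G1_bij[of q] unfolding G_def by simp
    define N where "N = n*q"
    define F0 where "F0 = (\<lambda>j x. if j < 1 then G j x else if j < 1+h then 1*q + x*h + (j-1) + 1
                     else N - (x*h + (j-1-h)))"
    have N': "N = (1+2*h)*q" using h N_def by simp
    note P = pairs_ext[OF G N' F0_def]
    have B: "bij_betw (\<lambda>(j,x). F0 j x) ({0..<n}\<times>{0..<q}) {1..n*q}" using P(1) h N_def by simp
    have C: "\<forall>x<q. (\<Sum>j<n. F0 j x) = (x+1) + h*(N+1*q+1)" using P(2) h by (simp add: G_def)
    show ?thesis
    proof (rule main_reduction[OF sg pi B])
      fix c b v assume c: "c<t" and b: "b<p" and v: "v\<in>V"
      define d where "d = c*p+b"
      have dd: "d < t*p" using dlt[OF c b] d_def by simp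
      have nb: "nbhd CV (copies_adj E) (d,v) = Pair d ` nbhd V E v"
        unfolding CV nbhd_def copies_adj_def using dd by auto
      have "(\<Sum>w\<in>nbhd V E v. g (d,w)) = (\<Sum>y\<in>nbhd CV (copies_adj E) (d,v). g y)"
        unfolding nb by (subst sum.reindex) (auto simp: inj_on_def)
      also have "\<dots> = k" using gk dd v CV by auto
      finally have gs: "(\<Sum>w\<in>nbhd V E v. g (d,w)) = k" .
      have "(\<Sum>w\<in>nbhd V E v. \<Sum>j<n. F0 j (\<pi>(c,(b,w)))) = (\<Sum>w\<in>nbhd V E v. g (d,w) + h*(N+1*q+1))"
      proof (rule sum.cong)
        fix w assume "w \<in> nbhd V E v"
        then have w: "w \<in> V" unfolding nbhd_def by simp
        have gi: "g (d,w) \<in> {1..q}" using gin[OF c b w] d_def by simp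
        have "\<pi>(c,(b,w)) = g (d,w) - 1" unfolding \<pi>_def d_def by simp
        then show "(\<Sum>j<n. F0 j (\<pi>(c,(b,w)))) = g (d,w) + h*(N+1*q+1)" using C gi by auto
      qed simp
      also have "\<dots> = k + r * (h*(N+1*q+1))" using gs r v by (simp add: sum.distrib)
      finally show "(\<Sum>w\<in>nbhd V E v. \<Sum>j<n. F0 j (\<pi>(c,(b,w)))) = k + r * (h*(N+1*q+1))" .
    qed
  qed
qed

end
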